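(* Let $G$ be a complete bisplit graph with vertex partition $X,Y,Z$. Then the sparing number of $G$ is the product of the cardinalities of the two of these three sets having minimum cardinality.
   Context: A bisplit graph is a graph whose vertex set is partitioned into three independent sets $X,Y,Z$ such that $Y\cup Z$ induces a complete bipartite subgraph; it is a complete bisplit graph if, in addition, every vertex of $X$ is adjacent to every vertex of $Y\cup Z$ (so $G$ is a complete tripartite graph with parts $X,Y,Z$). Let $\mathbb{N}_0$ be the set of non-negative integers; for $A,B\subseteq\mathbb{N}_0$, $A+B=\{a+b:a\in A,b\in B\}$. An integer additive set-indexer (IASI) of a graph $G$ is an injective map $f:V(G)\to\mathcal{P}(\mathbb{N}_0)$ such that $f^+:E(G)\to\mathcal{P}(\mathbb{N}_0)$, $f^+(uv)=f(u)+f(v)$, is injective. A weak IASI is an IASI with $|f^+(uv)|=\max(|f(u)|,|f(v)|)$ for every edge $uv$. An edge $e$ is mono-indexed if $|f^+(e)|=1$. The sparing number $\varphi(G)$ is the minimum number of mono-indexed edges over all weak IASIs of $G$. *)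

theory Defs
  imports Main
begin

definition simple_graph :: "'a set \<Rightarrow> 'a set set \<Rightarrow> bool" where
  "simple_graph V E \<longleftrightarrow> finite V \<and> (\<forall>e\<in>E. \<exists>u v. e = {u, v} \<and> u \<noteq> v \<and> u \<in> V \<and> v \<in> V)"

definition complete_bisplit :: "'a set \<Rightarrow> 'a set set \<Rightarrow> 'a set \<Rightarrow> 'a set \<Rightarrow> 'a set \<Rightarrow> bool" where
  "complete_bisplit V E X Y Z \<longleftrightarrow>
     simple_graph V E \<and> V = X \<union> Y \<union> Z \<and>
     X \<noteq> {} \<and> Y \<noteq> {} \<and> Z \<noteq> {} \<and>
     X \<inter> Y = {} \<and> Y \<inter> Z = {} \<and> X \<inter> Z = {} \<and>
     E = {{u, v} |u v. (u \<in> X \<and> v \<in> Y) \<or> (u \<in> Y \<and> v \<in> Z) \<or> (u \<in> X \<and> v \<in> Z)}"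

definition sumset :: "nat set \<Rightarrow> nat set \<Rightarrow> nat set" where
  "sumset A B = {a + b |a b. a \<in> A \<and> b \<in> B}"

definition iasi :: "'a set \<Rightarrow> 'a set set \<Rightarrow> ('a \<Rightarrow> nat set) \<Rightarrow> bool" where
  "iasi V E f \<longleftrightarrow>
     (\<forall>v\<in>V. f v \<noteq> {} \<and> finite (f v)) \<and> inj_on f V \<and>
     (\<forall>u v u' v'. {u, v} \<in> E \<longrightarrow> {u', v'} \<in> E \<longrightarrow>
        sumset (f u) (f v) = sumset (f u') (f v') \<longrightarrow> {u, v} = {u', v'})"

definition weak_iasi :: "'a set \<Rightarrow> 'a set set \<Rightarrow> ('a \<Rightarrow> nat set) \<Rightarrow> bool" where
  "weak_iasi V E f \<longleftrightarrow> iasi V E f \<and>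
     (\<forall>u v. {u, v} \<in> E \<longrightarrow> card (sumset (f u) (f v)) = max (card (f u)) (card (f v)))"

definition mono_indexed_edges :: "'a set set \<Rightarrow> ('a \<Rightarrow> nat set) \<Rightarrow> 'a set set" where
  "mono_indexed_edges E f = {e \<in> E. \<exists>u v. e = {u, v} \<and> card (sumset (f u) (f v)) = 1}"

definition sparing_number :: "'a set \<Rightarrow> 'a set set \<Rightarrow> nat" where
  "sparing_number V E = (LEAST n. \<exists>f. weak_iasi V E f \<and> n = card (mono_indexed_edges E f))"

end

theory Submission
  imports Defs
begin

lemma sort3: "sort [a::nat,b,c]!0 * sort [a,b,c]!1 =
   (if b \<le> a \<and> c \<le> a then b*c else if a \<le> b \<and> c \<le> b then a*c else a*b)"
  by auto

lemma sumset_commute: "sumset A B = sumset B A"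
  unfolding sumset_def by (metis (mono_tags, lifting) add.commute)

lemma sumset_single: "sumset {a} {b} = {a+b}"
  unfolding sumset_def by auto

lemma sumset_two: "sumset {0, c} {d} = {d, c+d}"
  unfolding sumset_def by auto

lemma sumset_finite: "finite A \<Longrightarrow> finite B \<Longrightarrow> finite (sumset A B)"
proof -
  assume "finite A" "finite B"
  have "sumset A B = (\<lambda>(x,y). x+y) ` (A \<times> B)" unfolding sumset_def by auto
  thus ?thesis using \<open>finite A\<close> \<open>finite B\<close> by simp
qed

lemma sumset_card_ge:
  assumes fA: "finite A" and fB: "finite B" and nA: "A \<noteq> {}" and nB: "B \<noteq> {}"
  shows "card A + card B \<le> card (sumset A B) + 1"
proof -
  define a where "a = Max A"
  define b where "b = Min B"
  have aA: "a \<in> A" and amax: "\<And>x. x \<in> A \<Longrightarrow> x \<le> a" using fA nA unfolding a_def by auto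
  have bB: "b \<in> B" and bmin: "\<And>y. y \<in> B \<Longrightarrow> b \<le> y" using fB nB unfolding b_def by auto
  define S1 where "S1 = (\<lambda>x. x + b) ` A"
  define S2 where "S2 = (\<lambda>y. a + y) ` B"
  have c1: "card S1 = card A" unfolding S1_def by (rule card_image) (auto simp: inj_on_def)
  have c2: "card S2 = card B" unfolding S2_def by (rule card_image) (auto simp: inj_on_def)
  have sub: "S1 \<union> S2 \<subseteq> sumset A B" unfolding S1_def S2_def sumset_def using aA bB by auto
  have int: "S1 \<inter> S2 \<subseteq> {a + b}"
  proof
    fix t assume "t \<in> S1 \<inter> S2"
    then obtain x y where x: "x \<in> A" "t = x + b" and y: "y \<in> B" "t = a + y"
      unfolding S1_def S2_def by auto
    have "x \<le> a" "b \<le> y" using amax[OF x(1)] bmin[OF y(1)] .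
    thus "t \<in> {a+b}" using x y by auto
  qed
  have f1: "finite S1" "finite S2" unfolding S1_def S2_def using fA fB by auto
  have "card (S1 \<inter> S2) \<le> 1" using card_mono[OF _ int] by simp
  moreover have "card (S1 \<union> S2) + card (S1 \<inter> S2) = card S1 + card S2"
    using card_Un_Int[OF f1] by simp
  moreover have "card (S1 \<union> S2) \<le> card (sumset A B)"
    using card_mono[OF sumset_finite[OF fA fB] sub] .
  ultimately show ?thesis using c1 c2 by linarith
qed

lemma cb_facts:
  assumes "complete_bisplit V E X Y Z"
  shows "finite V" "V = X \<union> Y \<union> Z" "X \<noteq> {}" "Y \<noteq> {}" "Z \<noteq> {}"
    "X \<inter> Y = {}" "Y \<inter> Z = {}" "X \<inter> Z = {}"
    "E = {{u, v} |u v. (u \<in> X \<and> v \<in> Y) \<or> (u \<in> Y \<and> v \<in> Z) \<or> (u \<in> X \<and> v \<in> Z)}"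
    "simple_graph V E"
  using assms unfolding complete_bisplit_def by (elim conjE; simp add: simple_graph_def)+

lemma cb_finE:
  assumes "complete_bisplit V E X Y Z" shows "finite E"
proof -
  have "E \<subseteq> Pow V"
  proof
    fix e assume "e \<in> E"
    have "\<exists>u v. e = {u, v} \<and> u \<noteq> v \<and> u \<in> V \<and> v \<in> V"
      using cb_facts(10)[OF assms] \<open>e \<in> E\<close> unfolding simple_graph_def by (elim conjE) (erule bspec)
    then obtain u v where "e = {u,v}" "u \<in> V" "v \<in> V" by blast
    thus "e \<in> Pow V" by simp
  qed
  moreover have "finite (Pow V)" using cb_facts(1)[OF assms] by simp
  ultimately show ?thesis by (rule finite_subset)
qed

lemma cb_edge_cases:
  assumes "complete_bisplit V E X Y Z" "{u,v} \<in> E"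
  shows "(u\<in>X\<and>v\<in>Y)\<or>(u\<in>Y\<and>v\<in>X)\<or>(u\<in>Y\<and>v\<in>Z)\<or>(u\<in>Z\<and>v\<in>Y)\<or>(u\<in>X\<and>v\<in>Z)\<or>(u\<in>Z\<and>v\<in>X)"
proof -
  from assms(2) cb_facts(9)[OF assms(1)] obtain a b where
    "{u,v} = {a,b}" "(a \<in> X \<and> b \<in> Y) \<or> (a \<in> Y \<and> b \<in> Z) \<or> (a \<in> X \<and> b \<in> Z)" by blast
  thus ?thesis unfolding doubleton_eq_iff by blast
qed

lemma mem_pairs: "P a b \<Longrightarrow> {a,b} \<in> {{u,v}|u v. P u v}"
  by blast

lemma cb_edge_XY: assumes "complete_bisplit V E X Y Z" "u \<in> X" "v \<in> Y" shows "{u,v} \<in> E"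
  unfolding cb_facts(9)[OF assms(1)] by (rule mem_pairs) (simp add: assms)
lemma cb_edge_YZ: assumes "complete_bisplit V E X Y Z" "u \<in> Y" "v \<in> Z" shows "{u,v} \<in> E"
  unfolding cb_facts(9)[OF assms(1)] by (rule mem_pairs) (simp add: assms)
lemma cb_edge_XZ: assumes "complete_bisplit V E X Y Z" "u \<in> X" "v \<in> Z" shows "{u,v} \<in> E"
  unfolding cb_facts(9)[OF assms(1)] by (rule mem_pairs) (simp add: assms)

lemma Eset_perm1:
  "{{u, v} |u v. (u \<in> X \<and> v \<in> Y) \<or> (u \<in> Y \<and> v \<in> Z) \<or> (u \<in> X \<and> v \<in> Z)}
 = {{u, v} |u v. (u \<in> Y \<and> v \<in> X) \<or> (u \<in> X \<and> v \<in> Z) \<or> (u \<in> Y \<and> v \<in> Z)}"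
  (is "?A = ?B")
proof (rule set_eqI, rule iffI)
  fix e assume "e \<in> ?A"
  then obtain u v where e: "e = {u,v}" "(u \<in> X \<and> v \<in> Y) \<or> (u \<in> Y \<and> v \<in> Z) \<or> (u \<in> X \<and> v \<in> Z)" by blast
  have e': "e = {v,u}" using e by (simp add: insert_commute)
  from e(2) show "e \<in> ?B"
  proof (elim disjE)
    assume "u \<in> X \<and> v \<in> Y" thus ?thesis unfolding e' by (intro mem_pairs) simp
  next
    assume "u \<in> Y \<and> v \<in> Z" thus ?thesis unfolding e(1) by (intro mem_pairs) simp
  next
    assume "u \<in> X \<and> v \<in> Z" thus ?thesis unfolding e(1) by (intro mem_pairs) simp
  qed
next
  fix e assume "e \<in> ?B"
  then obtain u v where e: "e = {u,v}" "(u \<in> Y \<and> v \<in> X) \<or> (u \<in> X \<and> v \<in> Z) \<or> (u \<in> Y \<and> v \<in> Z)" by blast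
  have e': "e = {v,u}" using e by (simp add: insert_commute)
  from e(2) show "e \<in> ?A"
  proof (elim disjE)
    assume "u \<in> Y \<and> v \<in> X" thus ?thesis unfolding e' by (intro mem_pairs) simp
  next
    assume "u \<in> X \<and> v \<in> Z" thus ?thesis unfolding e(1) by (intro mem_pairs) simp
  next
    assume "u \<in> Y \<and> v \<in> Z" thus ?thesis unfolding e(1) by (intro mem_pairs) simp
  qed
qed

lemma Eset_perm2:
  "{{u, v} |u v. (u \<in> X \<and> v \<in> Y) \<or> (u \<in> Y \<and> v \<in> Z) \<or> (u \<in> X \<and> v \<in> Z)}
 = {{u, v} |u v. (u \<in> Z \<and> v \<in> X) \<or> (u \<in> X \<and> v \<in> Y) \<or> (u \<in> Z \<and> v \<in> Y)}"
  (is "?A = ?B")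
proof (rule set_eqI, rule iffI)
  fix e assume "e \<in> ?A"
  then obtain u v where e: "e = {u,v}" "(u \<in> X \<and> v \<in> Y) \<or> (u \<in> Y \<and> v \<in> Z) \<or> (u \<in> X \<and> v \<in> Z)" by blast
  have e': "e = {v,u}" using e by (simp add: insert_commute)
  from e(2) show "e \<in> ?B"
  proof (elim disjE)
    assume "u \<in> X \<and> v \<in> Y" thus ?thesis unfolding e(1) by (intro mem_pairs) simp
  next
    assume "u \<in> Y \<and> v \<in> Z" thus ?thesis unfolding e' by (intro mem_pairs) simp
  next
    assume "u \<in> X \<and> v \<in> Z" thus ?thesis unfolding e' by (intro mem_pairs) simp
  qed
next
  fix e assume "e \<in> ?B"
  then obtain u v where e: "e = {u,v}" "(u \<in> Z \<and> v \<in> X) \<or> (u \<in> X \<and> v \<in> Y) \<or> (u \<in> Z \<and> v \<in> Y)" by blast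
  have e': "e = {v,u}" using e by (simp add: insert_commute)
  from e(2) show "e \<in> ?A"
  proof (elim disjE)
    assume "u \<in> Z \<and> v \<in> X" thus ?thesis unfolding e' by (intro mem_pairs) simp
  next
    assume "u \<in> X \<and> v \<in> Y" thus ?thesis unfolding e(1) by (intro mem_pairs) simp
  next
    assume "u \<in> Z \<and> v \<in> Y" thus ?thesis unfolding e' by (intro mem_pairs) simp
  qed
qed

lemma cb_perm1: "complete_bisplit V E X Y Z \<Longrightarrow> complete_bisplit V E Y X Z"
  unfolding complete_bisplit_def using Eset_perm1[of X Y Z] by (auto simp: Un_commute Int_commute)

lemma cb_perm2: "complete_bisplit V E X Y Z \<Longrightarrow> complete_bisplit V E Z X Y"
  unfolding complete_bisplit_def using Eset_perm2[of X Y Z] by (auto simp: Un_commute Un_left_commute Int_commute)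


lemma pair_card:
  assumes "P \<inter> Q = {}" "finite P" "finite Q"
  shows "card ((\<lambda>(p,q). {p,q}) ` (P \<times> Q)) = card P * card Q"
proof -
  have "inj_on (\<lambda>(p,q). {p,q}) (P \<times> Q)"
  proof (rule inj_onI, clarify)
    fix p q p' q' assume "p \<in> P" "q \<in> Q" "p' \<in> P" "q' \<in> Q" "{p,q} = {p',q'}"
    thus "p = p' \<and> q = q'" using assms(1) unfolding doubleton_eq_iff by blast
  qed
  hence "card ((\<lambda>(p,q). {p,q}) ` (P \<times> Q)) = card (P \<times> Q)" by (rule card_image)
  thus ?thesis by (simp add: card_cartesian_product)
qed

lemma weak_edge_one:
  assumes cb: "complete_bisplit V E X Y Z" and w: "weak_iasi V E f" and e: "{u,v} \<in> E"
  shows "card (f u) = 1 \<or> card (f v) = 1"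
proof -
  have uv: "u \<in> V" "v \<in> V" using cb_edge_cases[OF cb e] cb_facts(2)[OF cb] by blast+
  have ia: "iasi V E f" using w unfolding weak_iasi_def by blast
  have fu: "f u \<noteq> {}" "finite (f u)" and fv: "f v \<noteq> {}" "finite (f v)"
    using ia uv unfolding iasi_def by blast+
  have c: "card (sumset (f u) (f v)) = max (card (f u)) (card (f v))"
    using w e unfolding weak_iasi_def by blast
  have "card (f u) + card (f v) \<le> card (sumset (f u) (f v)) + 1"
    by (rule sumset_card_ge) (use fu fv in auto)
  moreover have "card (f u) \<ge> 1" "card (f v) \<ge> 1" using fu fv
    by (simp_all add: Suc_le_eq card_gt_0_iff)
  ultimately show ?thesis using c by linarith
qed

lemma mono_lb:
  assumes cb: "complete_bisplit V E X Y Z" and PQ: "P \<subseteq> V" "Q \<subseteq> V" "P \<inter> Q = {}"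
    and edges: "\<And>p q. p \<in> P \<Longrightarrow> q \<in> Q \<Longrightarrow> {p,q} \<in> E"
    and one: "\<And>v. v \<in> P \<union> Q \<Longrightarrow> card (f v) = 1"
  shows "card P * card Q \<le> card (mono_indexed_edges E f)"
proof -
  have fV: "finite V" using cb_facts(1)[OF cb] .
  have fP: "finite P" "finite Q" using PQ fV finite_subset by blast+
  have sub: "(\<lambda>(p,q). {p,q}) ` (P \<times> Q) \<subseteq> mono_indexed_edges E f"
  proof clarify
    fix p q assume pq: "p \<in> P" "q \<in> Q"
    obtain a where a: "f p = {a}" using one[of p] pq card_1_singletonE by blast
    obtain b where b: "f q = {b}" using one[of q] pq card_1_singletonE by blast
    have "card (sumset (f p) (f q)) = 1" unfolding a b sumset_single by simp
    thus "{p,q} \<in> mono_indexed_edges E f" unfolding mono_indexed_edges_def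
      using edges[OF pq] by blast
  qed
  have fin: "finite (mono_indexed_edges E f)"
    using cb_finE[OF cb] unfolding mono_indexed_edges_def by simp
  show ?thesis using card_mono[OF fin sub] pair_card[OF PQ(3) fP] by simp
qed

lemma lower:
  assumes cb: "complete_bisplit V E X Y Z" and w: "weak_iasi V E f"
    and cY: "card Y \<le> card X" and cZ: "card Z \<le> card X"
  shows "card Y * card Z \<le> card (mono_indexed_edges E f)"
proof -
  note F = cb_facts[OF cb]
  define S where "S = {v \<in> V. card (f v) \<noteq> 1}"
  have noedge: "\<And>a b. a \<in> S \<Longrightarrow> b \<in> S \<Longrightarrow> {a,b} \<notin> E"
    using weak_edge_one[OF cb w] unfolding S_def by blast
  have one: "\<And>v. v \<in> V \<Longrightarrow> v \<notin> S \<Longrightarrow> card (f v) = 1" unfolding S_def by blast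
  have XV: "X \<subseteq> V" "Y \<subseteq> V" "Z \<subseteq> V" using F(2) by blast+
  show ?thesis
  proof (cases "S \<inter> Y = {}")
    case True
    show ?thesis
    proof (cases "S \<inter> Z = {}")
      case True2: True
      show ?thesis
        by (rule mono_lb[OF cb XV(2,3) F(7)]) (use cb_edge_YZ[OF cb] one XV True True2 in blast)+
    next
      case False
      then obtain z where z: "z \<in> S" "z \<in> Z" by blast
      have SX: "S \<inter> X = {}" using noedge[OF _ z(1)] cb_edge_XZ[OF cb _ z(2)] by blast
      have "card X * card Y \<le> card (mono_indexed_edges E f)"
        by (rule mono_lb[OF cb XV(1,2) F(6)]) (use cb_edge_XY[OF cb] one XV True SX in blast)+
      moreover have "card Y * card Z \<le> card X * card Y" using cZ by simp
      ultimately show ?thesis by linarith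
    qed
  next
    case False
    then obtain y where y: "y \<in> S" "y \<in> Y" by blast
    have SX: "S \<inter> X = {}" using noedge[OF _ y(1)] cb_edge_XY[OF cb _ y(2)] by blast
    have SZ: "S \<inter> Z = {}" using noedge[OF y(1)] cb_edge_YZ[OF cb y(2)] by blast
    have "card X * card Z \<le> card (mono_indexed_edges E f)"
      by (rule mono_lb[OF cb XV(1,3) F(8)]) (use cb_edge_XZ[OF cb] one XV SZ SX in blast)+
    moreover have "card Y * card Z \<le> card X * card Z" using cY by simp
    ultimately show ?thesis by linarith
  qed
qed


lemma upper:
  assumes cb: "complete_bisplit V E X Y Z"
  shows "\<exists>f. weak_iasi V E f \<and> card (mono_indexed_edges E f) = card Y * card Z"
proof -
  note F = cb_facts[OF cb]
  obtain h where h: "bij_betw h V {0..<card V}" using ex_bij_betw_finite_nat[OF F(1)] by blast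
  define M where "M = card V + 1"
  define g where "g w = h w + 1" for w
  have ginj: "inj_on g V" using h unfolding bij_betw_def inj_on_def g_def by auto
  have gb: "\<And>w. w \<in> V \<Longrightarrow> 1 \<le> g w \<and> g w < M"
    using h unfolding bij_betw_def g_def M_def by auto
  have M1: "M \<ge> 1" unfolding M_def by simp
  define f where "f w = (if w \<in> X then {0, g w} else if w \<in> Y then {g w} else {g w * M})" for w
  have XV: "X \<subseteq> V" "Y \<subseteq> V" "Z \<subseteq> V" using F(2) by blast+
  have fX: "\<And>x. x \<in> X \<Longrightarrow> f x = {0, g x}" unfolding f_def by simp
  have fY: "\<And>y. y \<in> Y \<Longrightarrow> f y = {g y}" using F(6) unfolding f_def by auto
  have fZ: "\<And>z. z \<in> Z \<Longrightarrow> f z = {g z * M}" using F(7,8) unfolding f_def by auto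
  have gone: "\<And>S w. S \<subseteq> V \<Longrightarrow> w \<in> S \<Longrightarrow> {w' \<in> S. g w' = g w} = {w}"
    using ginj unfolding inj_on_def by blast
  define D where "D T = {w \<in> X. card T = 2 \<and> g w = Max T - Min T} \<union> {w \<in> Y. g w = Min T mod M}
      \<union> {w \<in> Z. g w = Min T div M}" for T
  have sXY: "sumset (f x) (f y) = {g y, g x + g y}" if "x \<in> X" "y \<in> Y" for x y
    using that fX fY sumset_two by simp
  have sXZ: "sumset (f x) (f z) = {g z * M, g x + g z * M}" if "x \<in> X" "z \<in> Z" for x z
    using that fX fZ sumset_two by simp
  have sYZ: "sumset (f y) (f z) = {g y + g z * M}" if "y \<in> Y" "z \<in> Z" for y z
    using that fY fZ sumset_single by simp
  have dXY: "D (sumset (f x) (f y)) = {x, y}" if xy: "x \<in> X" "y \<in> Y" for x y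
  proof -
    have b: "1 \<le> g x" "g x < M" "1 \<le> g y" "g y < M" using gb XV xy by auto
    let ?T = "{g y, g x + g y}"
    have T: "card ?T = 2" "Min ?T = g y" "Max ?T = g x + g y" using b by auto
    have "g y mod M = g y" "g y div M = 0" using b by auto
    hence "D ?T = {w \<in> X. g w = g x} \<union> {w \<in> Y. g w = g y} \<union> {w \<in> Z. g w = 0}"
      unfolding D_def T by simp
    also have "\<dots> = {x} \<union> {y} \<union> {}"
      using gone[OF XV(1) xy(1)] gone[OF XV(2) xy(2)] gb XV by force
    finally show ?thesis using sXY[OF xy] by auto
  qed
  have dXZ: "D (sumset (f x) (f z)) = {x, z}" if xz: "x \<in> X" "z \<in> Z" for x z
  proof -
    have b: "1 \<le> g x" "g x < M" "1 \<le> g z" "g z < M" using gb XV xz by auto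
    let ?T = "{g z * M, g x + g z * M}"
    have T: "card ?T = 2" "Min ?T = g z * M" "Max ?T = g x + g z * M" using b by auto
    have "(g z * M) mod M = 0" "(g z * M) div M = g z" using b M1 by auto
    hence "D ?T = {w \<in> X. g w = g x} \<union> {w \<in> Y. g w = 0} \<union> {w \<in> Z. g w = g z}"
      unfolding D_def T by simp
    also have "\<dots> = {x} \<union> {} \<union> {z}"
      using gone[OF XV(1) xz(1)] gone[OF XV(3) xz(2)] gb XV by force
    finally show ?thesis using sXZ[OF xz] by auto
  qed
  have dYZ: "D (sumset (f y) (f z)) = {y, z}" if yz: "y \<in> Y" "z \<in> Z" for y z
  proof -
    have b: "1 \<le> g y" "g y < M" "1 \<le> g z" "g z < M" using gb XV yz by auto
    let ?T = "{g y + g z * M}"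
    have T: "card ?T = 1" "Min ?T = g y + g z * M" by auto
    have "(g y + g z * M) mod M = g y" "(g y + g z * M) div M = g z" using b M1 by auto
    hence "D ?T = {w \<in> Y. g w = g y} \<union> {w \<in> Z. g w = g z}"
      unfolding D_def T by simp
    also have "\<dots> = {y} \<union> {z}"
      using gone[OF XV(2) yz(1)] gone[OF XV(3) yz(2)] by force
    finally show ?thesis using sYZ[OF yz] by auto
  qed
  have dec: "D (sumset (f u) (f v)) = {u, v}" if e: "{u,v} \<in> E" for u v
    using cb_edge_cases[OF cb e] dXY dXZ dYZ sumset_commute insert_commute by metis
  have cXY: "card (sumset (f x) (f y)) = 2" if "x \<in> X" "y \<in> Y" for x y
    using sXY[OF that] gb XV that by force
  have cXZ: "card (sumset (f x) (f z)) = 2" if "x \<in> X" "z \<in> Z" for x z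
    using sXZ[OF that] gb XV that by force
  have cYZ: "card (sumset (f y) (f z)) = 1" if "y \<in> Y" "z \<in> Z" for y z
    using sYZ[OF that] by simp
  have cXY': "card (sumset (f y) (f x)) = 2" if "x \<in> X" "y \<in> Y" for x y
    using cXY[OF that] sumset_commute by metis
  have cXZ': "card (sumset (f z) (f x)) = 2" if "x \<in> X" "z \<in> Z" for x z
    using cXZ[OF that] sumset_commute by metis
  have cYZ': "card (sumset (f z) (f y)) = 1" if "y \<in> Y" "z \<in> Z" for y z
    using cYZ[OF that] sumset_commute by metis
  have cfX: "card (f x) = 2" if "x \<in> X" for x using fX[OF that] gb XV that by force
  have cfY: "card (f y) = 1" if "y \<in> Y" for y using fY[OF that] by simp
  have cfZ: "card (f z) = 1" if "z \<in> Z" for z using fZ[OF that] by simp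
  have csum: "card (sumset (f u) (f v)) = (if u \<in> X \<or> v \<in> X then 2 else 1)" if e: "{u,v} \<in> E" for u v
  proof -
    have "(u\<in>X\<and>v\<in>Y)\<or>(u\<in>Y\<and>v\<in>X)\<or>(u\<in>Y\<and>v\<in>Z)\<or>(u\<in>Z\<and>v\<in>Y)\<or>(u\<in>X\<and>v\<in>Z)\<or>(u\<in>Z\<and>v\<in>X)"
      by (rule cb_edge_cases[OF cb e])
    thus ?thesis using cXY cXZ cYZ cXY' cXZ' cYZ' F(6,7,8) by (elim disjE) auto
  qed
  have weak: "weak_iasi V E f"
    unfolding weak_iasi_def iasi_def
  proof (intro conjI ballI allI impI)
    fix v assume "v \<in> V" thus "f v \<noteq> {}" "finite (f v)" unfolding f_def by auto
  next
    show "inj_on f V"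
    proof (rule inj_onI)
      fix u v assume uv: "u \<in> V" "v \<in> V" "f u = f v"
      have bu: "1 \<le> g u" "g u < M" and bv: "1 \<le> g v" "g v < M" using gb uv by auto
      have "g u = g v"
      proof -
        have p: "u \<in> X \<or> u \<in> Y \<or> u \<in> Z" "v \<in> X \<or> v \<in> Y \<or> v \<in> Z" using uv F(2) by auto
        show ?thesis
        proof (cases "u \<in> X")
          case uX: True
          then have "0 \<in> f v" using uv(3) fX by auto
          hence vX: "v \<in> X" using p(2) fY fZ bv M1 by auto
          have "{0, g u} = {0, g v}" using uv(3) fX uX vX by simp
          thus ?thesis using bu bv unfolding doubleton_eq_iff by auto
        next
          case uX: False
          have vX: "v \<notin> X"
          proof
            assume "v \<in> X" hence "0 \<in> f u" using uv(3) fX by auto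
            thus False using p(1) uX fY fZ bu M1 by auto
          qed
          show ?thesis
          proof (cases "u \<in> Y")
            case uY: True
            show ?thesis
            proof (cases "v \<in> Y")
              case True thus ?thesis using uv(3) fY uY by auto
            next
              case False hence "v \<in> Z" using p vX by auto
              hence "g u = g v * M" using uv(3) fY fZ uY by auto
              moreover have "g v * M \<ge> M" using bv by simp
              ultimately show ?thesis using bu by linarith
            qed
          next
            case uY: False
            hence uZ: "u \<in> Z" using p uX by auto
            show ?thesis
            proof (cases "v \<in> Y")
              case True
              hence "g v = g u * M" using uv(3) fY fZ uZ by auto
              moreover have "g u * M \<ge> M" using bu by simp
              ultimately show ?thesis using bv by linarith
            next
              case False hence "v \<in> Z" using p vX by auto
              hence "g u * M = g v * M" using uv(3) fZ uZ by auto
              thus ?thesis using M1 by simp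
            qed
          qed
        qed
      qed
      thus "u = v" using ginj uv unfolding inj_on_def by blast
    qed
  next
    fix u v u' v' assume "{u, v} \<in> E" "{u', v'} \<in> E" "sumset (f u) (f v) = sumset (f u') (f v')"
    thus "{u, v} = {u', v'}" using dec by metis
  next
    fix u v assume e: "{u, v} \<in> E"
    have "(u\<in>X\<and>v\<in>Y)\<or>(u\<in>Y\<and>v\<in>X)\<or>(u\<in>Y\<and>v\<in>Z)\<or>(u\<in>Z\<and>v\<in>Y)\<or>(u\<in>X\<and>v\<in>Z)\<or>(u\<in>Z\<and>v\<in>X)"
      by (rule cb_edge_cases[OF cb e])
    thus "card (sumset (f u) (f v)) = max (card (f u)) (card (f v))"
      using csum[OF e] cfX cfY cfZ F(6,7,8) by (elim disjE) auto
  qed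
  have mono: "mono_indexed_edges E f = (\<lambda>(p,q). {p,q}) ` (Y \<times> Z)"
  proof (rule set_eqI, rule iffI)
    fix e assume "e \<in> mono_indexed_edges E f"
    then obtain u v where e: "e = {u,v}" "e \<in> E" "card (sumset (f u) (f v)) = 1"
      unfolding mono_indexed_edges_def by blast
    have uvE: "{u,v} \<in> E" using e(1,2) by simp
    have ce: "(u\<in>X\<and>v\<in>Y)\<or>(u\<in>Y\<and>v\<in>X)\<or>(u\<in>Y\<and>v\<in>Z)\<or>(u\<in>Z\<and>v\<in>Y)\<or>(u\<in>X\<and>v\<in>Z)\<or>(u\<in>Z\<and>v\<in>X)"
      by (rule cb_edge_cases[OF cb uvE])
    from csum[OF uvE] e(3) have "\<not>(u \<in> X \<or> v \<in> X)" by (cases "u \<in> X \<or> v \<in> X") auto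
    hence "(u \<in> Y \<and> v \<in> Z) \<or> (v \<in> Y \<and> u \<in> Z)" using ce by blast
    thus "e \<in> (\<lambda>(p,q). {p,q}) ` (Y \<times> Z)"
    proof
      assume a: "u \<in> Y \<and> v \<in> Z"
      show ?thesis by (rule image_eqI[of _ _ "(u,v)"]) (use a e(1) in auto)
    next
      assume a: "v \<in> Y \<and> u \<in> Z"
      have "e = {v,u}" using e(1) by (simp add: insert_commute)
      thus ?thesis by (intro image_eqI[of _ _ "(v,u)"]) (use a in auto)
    qed
  next
    fix e assume "e \<in> (\<lambda>(p,q). {p,q}) ` (Y \<times> Z)"
    then obtain y z where yz: "y \<in> Y" "z \<in> Z" "e = {y,z}" by blast
    thus "e \<in> mono_indexed_edges E f" unfolding mono_indexed_edges_def
      using cb_edge_YZ[OF cb yz(1,2)] cYZ[OF yz(1,2)] by blast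
  qed
  have "card (mono_indexed_edges E f) = card Y * card Z"
    unfolding mono by (rule pair_card[OF F(7)]) (use XV F(1) finite_subset in blast)+
  thus ?thesis using weak by blast
qed


lemma main:
  assumes cb: "complete_bisplit V E X Y Z" and cY: "card Y \<le> card X" and cZ: "card Z \<le> card X"
  shows "sparing_number V E = card Y * card Z"
  unfolding sparing_number_def
proof (rule Least_equality)
  show "\<exists>f. weak_iasi V E f \<and> card Y * card Z = card (mono_indexed_edges E f)"
    using upper[OF cb] by metis
next
  fix n assume "\<exists>f. weak_iasi V E f \<and> n = card (mono_indexed_edges E f)"
  then obtain f where "weak_iasi V E f" "n = card (mono_indexed_edges E f)" by blast
  thus "card Y * card Z \<le> n" using lower[OF cb _ cY cZ] by simp
qed

theorem proposition2p9:
  fixes V X Y Z :: "'a set" and E :: "'a set set"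
  assumes "complete_bisplit V E X Y Z"
  shows "sparing_number V E =
           sort [card X, card Y, card Z] ! 0 * sort [card X, card Y, card Z] ! 1"
proof -
  have p1: "complete_bisplit V E Y X Z" by (rule cb_perm1[OF assms])
  have p2: "complete_bisplit V E Z X Y" by (rule cb_perm2[OF assms])
  have "sparing_number V E = (if card Y \<le> card X \<and> card Z \<le> card X then card Y * card Z
     else if card X \<le> card Y \<and> card Z \<le> card Y then card X * card Z else card X * card Y)"
  proof (cases "card Y \<le> card X \<and> card Z \<le> card X")
    case True thus ?thesis using main[OF assms] by simp
  next
    case F1: False
    show ?thesis
    proof (cases "card X \<le> card Y \<and> card Z \<le> card Y")
      case True thus ?thesis using main[OF p1] F1 by simp
    next
      case False
      hence "card X \<le> card Z" "card Y \<le> card Z" using F1 by auto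
      thus ?thesis using main[OF p2] F1 False by (simp add: mult.commute)
    qed
  qed
  thus ?thesis unfolding sort3 .
qed

end
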